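(* The Walnut group $W=(\mathrm{SO}(2,\mathbb{R})\ltimes\mathbb{H})/D$ has the topological $R_\infty$-property.
   Context: $\mathbb{H}$ is the 3-dimensional Heisenberg group of real $3\times3$ upper triangular unipotent matrices; write its element $(y_{ij})$ as $(a,b,c)$ with $a=y_{12}$, $b=y_{23}$, $c=y_{13}$. $\mathrm{GL}(2,\mathbb{R})$ acts on $\mathbb{H}$ by automorphisms via: for $\psi=(x_{ij})\in\mathrm{GL}(2,\mathbb{R})$, $\psi(a,b,c)=\big(x_{11}a+x_{12}b,\ x_{21}a+x_{22}b,\ c\det\psi-\tfrac12ab\det\psi+\tfrac12(x_{11}a+x_{12}b)(x_{21}a+x_{22}b)\big)$. The semidirect product $\mathrm{SO}(2,\mathbb{R})\ltimes\mathbb{H}$ uses the restriction of this action; its center is the center $Z=\{(0,0,c)\}$ of $\mathbb{H}$, and $D$ is an infinite discrete subgroup of $Z$. For an automorphism $\varphi$ of a group $G$, the $\varphi$-twisted conjugacy classes are the equivalence classes of $x\sim_\varphi y$ iff $y=gx\varphi(g)^{-1}$ for some $g\in G$; $R(\varphi)$ is their number. A topological group $G$ has the topological $R_\infty$-property if $R(\varphi)=\infty$ for every automorphism $\varphi$ of $G$ that is a homeomorphism. *)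

theory Defs
  imports "HOL-Analysis.Analysis" "HOL-Algebra.Coset"
begin

text \<open>Elements of SO(2,R) semidirect H: a 2x2 real matrix M (in SO(2)) together with
  a Heisenberg element (a,b,c), where a = y12, b = y23, c = y13.\<close>

type_synonym heis = "real \<times> real \<times> real"
type_synonym sdp = "(real^2^2) \<times> heis"

definition heis_mult :: "heis \<Rightarrow> heis \<Rightarrow> heis" where
  "heis_mult = (\<lambda>(a,b,c) (a',b',c'). (a + a', b + b', c + c' + a * b'))"

definition gl_act :: "real^2^2 \<Rightarrow> heis \<Rightarrow> heis" where
  "gl_act X = (\<lambda>(a,b,c).
     (X$1$1 * a + X$1$2 * b,
      X$2$1 * a + X$2$2 * b,
      c * det X - 1/2 * a * b * det X
        + 1/2 * (X$1$1 * a + X$1$2 * b) * (X$2$1 * a + X$2$2 * b)))"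

definition SO2 :: "(real^2^2) set" where
  "SO2 = {M. orthogonal_matrix M \<and> det M = 1}"

definition SDP :: "sdp monoid" where
  "SDP = \<lparr> carrier = SO2 \<times> UNIV,
           mult = (\<lambda>(M,h) (N,k). (M ** N, heis_mult h (gl_act M k))),
           one = (mat 1, (0,0,0)) \<rparr>"

definition SDP_top :: "sdp topology" where
  "SDP_top = subtopology euclidean (SO2 \<times> UNIV)"

definition Zc :: "sdp set" where
  "Zc = {(mat 1, (0,0,c)) | c. True}"

definition quotient_top :: "'a topology \<Rightarrow> ('a \<Rightarrow> 'b) \<Rightarrow> 'b topology" where
  "quotient_top X f = topology (\<lambda>U. U \<subseteq> f ` topspace X \<and> openin X {x \<in> topspace X. f x \<in> U})"

definition Walnut :: "sdp set \<Rightarrow> sdp set monoid" where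
  "Walnut D = SDP Mod D"

definition Walnut_top :: "sdp set \<Rightarrow> sdp set topology" where
  "Walnut_top D = quotient_top SDP_top (\<lambda>x. D #>\<^bsub>SDP\<^esub> x)"

definition twisted_conj :: "('a, 'm) monoid_scheme \<Rightarrow> ('a \<Rightarrow> 'a) \<Rightarrow> ('a \<times> 'a) set" where
  "twisted_conj G \<phi> = {(x, y). x \<in> carrier G \<and> y \<in> carrier G \<and>
      (\<exists>g \<in> carrier G. y = g \<otimes>\<^bsub>G\<^esub> x \<otimes>\<^bsub>G\<^esub> inv\<^bsub>G\<^esub> (\<phi> g))}"

definition R_infinite :: "('a, 'm) monoid_scheme \<Rightarrow> ('a \<Rightarrow> 'a) \<Rightarrow> bool" where
  "R_infinite G \<phi> \<longleftrightarrow> infinite (carrier G // twisted_conj G \<phi>)"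

definition top_R_infty_property :: "('a, 'm) monoid_scheme \<Rightarrow> 'a topology \<Rightarrow> bool" where
  "top_R_infty_property G T \<longleftrightarrow>
     (\<forall>\<phi>. \<phi> \<in> iso G G \<and> homeomorphic_map T T \<phi> \<longrightarrow> R_infinite G \<phi>)"

end

theory Submission
  imports Defs
begin


lemma mat1_entries: "(mat 1 :: real^2^2)$1$1 = 1" "(mat 1 :: real^2^2)$1$2 = 0"
  "(mat 1 :: real^2^2)$2$1 = 0" "(mat 1 :: real^2^2)$2$2 = 1"
  by (simp_all add: mat_def)

lemma mmult_entries:
  fixes X Y :: "real^2^2"
  shows "(X ** Y)$1$1 = X$1$1*Y$1$1 + X$1$2*Y$2$1"
   "(X ** Y)$1$2 = X$1$1*Y$1$2 + X$1$2*Y$2$2"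
   "(X ** Y)$2$1 = X$2$1*Y$1$1 + X$2$2*Y$2$1"
   "(X ** Y)$2$2 = X$2$1*Y$1$2 + X$2$2*Y$2$2"
  by (simp_all add: matrix_matrix_mult_def sum_2)

lemma gl_act_hom:
  "gl_act X (heis_mult h k) = heis_mult (gl_act X h) (gl_act X k)"
  by (cases h; cases k) (simp add: gl_act_def heis_mult_def det_2 field_simps)

lemma gl_act_comp:
  fixes X Y :: "real^2^2"
  shows "gl_act (X ** Y) h = gl_act X (gl_act Y h)"
  by (cases h) (simp add: gl_act_def det_2 mmult_entries field_simps)

lemma gl_act_one: "gl_act (mat 1) h = h"
  by (cases h) (simp add: gl_act_def det_2 mat1_entries algebra_simps)

lemma gl_act_zero: "gl_act X (0,0,0) = (0,0,0)"
  by (simp add: gl_act_def)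


lemma heis_assoc: "heis_mult (heis_mult h k) l = heis_mult h (heis_mult k l)"
  by (cases h; cases k; cases l) (simp add: heis_mult_def algebra_simps)

lemma heis_lone: "heis_mult (0,0,0) h = h"
  by (cases h) (simp add: heis_mult_def)

definition hinv :: "heis \<Rightarrow> heis" where
  "hinv = (\<lambda>(a,b,c). (-a,-b,-c+a*b))"

lemma heis_linv: "heis_mult (hinv h) h = (0,0,0)"
  by (cases h) (simp add: heis_mult_def hinv_def)

lemma SO2_mult: "M \<in> SO2 \<Longrightarrow> N \<in> SO2 \<Longrightarrow> M ** N \<in> SO2"
  by (simp add: SO2_def orthogonal_matrix_mul det_mul)

lemma SO2_one: "mat 1 \<in> SO2"
  by (simp add: SO2_def orthogonal_matrix_id)

lemma SO2_transpose: "M \<in> SO2 \<Longrightarrow> transpose M \<in> SO2"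
  by (simp add: SO2_def)

lemma SO2_linv: "M \<in> SO2 \<Longrightarrow> transpose M ** M = mat 1"
  by (simp add: SO2_def orthogonal_matrix)

lemma SDP_simps: "carrier SDP = SO2 \<times> UNIV" "one SDP = (mat 1, (0,0,0))"
  "mult SDP x y = (fst x ** fst y, heis_mult (snd x) (gl_act (fst x) (snd y)))"
  by (simp_all add: SDP_def split_beta)

lemma group_SDP: "group SDP"
proof (rule groupI)
  fix x y assume "x \<in> carrier SDP" "y \<in> carrier SDP"
  then show "x \<otimes>\<^bsub>SDP\<^esub> y \<in> carrier SDP" by (auto simp: SDP_simps SO2_mult)
next
  show "\<one>\<^bsub>SDP\<^esub> \<in> carrier SDP" by (simp add: SDP_simps SO2_one)
next
  fix x y z assume "x \<in> carrier SDP" "y \<in> carrier SDP" "z \<in> carrier SDP"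
  show "x \<otimes>\<^bsub>SDP\<^esub> y \<otimes>\<^bsub>SDP\<^esub> z = x \<otimes>\<^bsub>SDP\<^esub> (y \<otimes>\<^bsub>SDP\<^esub> z)"
    by (simp add: SDP_simps matrix_mul_assoc gl_act_hom gl_act_comp heis_assoc)
next
  fix x assume "x \<in> carrier SDP"
  then show "\<one>\<^bsub>SDP\<^esub> \<otimes>\<^bsub>SDP\<^esub> x = x" by (simp add: SDP_simps gl_act_one heis_lone)
next
  fix x assume x: "x \<in> carrier SDP"
  show "\<exists>y\<in>carrier SDP. y \<otimes>\<^bsub>SDP\<^esub> x = \<one>\<^bsub>SDP\<^esub>"
  proof (intro bexI)
    show "(transpose (fst x), gl_act (transpose (fst x)) (hinv (snd x))) \<in> carrier SDP"
      using x by (auto simp: SDP_simps SO2_transpose)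
    show "(transpose (fst x), gl_act (transpose (fst x)) (hinv (snd x))) \<otimes>\<^bsub>SDP\<^esub> x = \<one>\<^bsub>SDP\<^esub>"
      using x by (auto simp: SDP_simps SO2_linv gl_act_hom[symmetric] heis_linv gl_act_zero)
  qed
qed


lemma SO2_char:
  assumes "M \<in> SO2"
  shows "M$2$2 = M$1$1" "M$1$2 = - M$2$1" "(M$1$1)^2 + (M$2$1)^2 = 1"
proof -
  have o: "transpose M ** M = mat 1" and d: "det M = 1" using assms by (auto simp: SO2_def orthogonal_matrix)
  have e11: "M$1$1*M$1$1 + M$2$1*M$2$1 = 1"
    using arg_cong[OF o, of "\<lambda>X. X$1$1"] by (simp add: mmult_entries mat1_entries transpose_def)
  have e22: "M$1$2*M$1$2 + M$2$2*M$2$2 = 1"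
    using arg_cong[OF o, of "\<lambda>X. X$2$2"] by (simp add: mmult_entries mat1_entries transpose_def)
  have dd: "M$1$1*M$2$2 - M$1$2*M$2$1 = 1" using d by (simp add: det_2)
  have "(M$1$1 - M$2$2)^2 + (M$1$2 + M$2$1)^2 = 0"
    using e11 e22 dd by (simp add: power2_eq_square algebra_simps)
  then have "(M$1$1 - M$2$2)^2 = 0" "(M$1$2 + M$2$1)^2 = 0"
    by (smt (verit) zero_le_power2)+
  then show "M$2$2 = M$1$1" "M$1$2 = - M$2$1" by auto
  show "(M$1$1)^2 + (M$2$1)^2 = 1" using e11 by (simp add: power2_eq_square)
qed

definition rotm :: "complex \<Rightarrow> real^2^2" where
  "rotm u = vector [vector [Re u, - Im u], vector [Im u, Re u]]"

lemma rotm_entries [simp]: "rotm u $1$1 = Re u" "rotm u $1$2 = - Im u"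
  "rotm u $2$1 = Im u" "rotm u $2$2 = Re u"
  by (simp_all add: rotm_def)

definition mk :: "complex \<Rightarrow> complex \<Rightarrow> real \<Rightarrow> sdp" where
  "mk u z c = (rotm u, (Re z, Im z, c))"

definition Rc :: "sdp \<Rightarrow> complex" where "Rc x = Complex (fst x$1$1) (fst x$2$1)"
definition Vc :: "sdp \<Rightarrow> complex" where "Vc x = Complex (fst (snd x)) (fst (snd (snd x)))"
definition Cc :: "sdp \<Rightarrow> real" where "Cc x = snd (snd (snd x))"

lemma RVC_mk [simp]: "Rc (mk u z c) = u" "Vc (mk u z c) = z" "Cc (mk u z c) = c"
  by (simp_all add: mk_def Rc_def Vc_def Cc_def complex_eq_iff)

lemma mat_eq2: "(M::real^2^2) = N \<longleftrightarrow> M$1$1 = N$1$1 \<and> M$1$2 = N$1$2 \<and> M$2$1 = N$2$1 \<and> M$2$2 = N$2$2"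
  by (auto simp: vec_eq_iff forall_2)

lemma rotm_one: "rotm 1 = mat 1"
  by (simp add: mat_eq2 mat1_entries)

lemma cmod1_iff: "cmod u = 1 \<longleftrightarrow> (Re u)^2 + (Im u)^2 = 1"
  by (simp add: cmod_def)

lemma rotm_SO2: "cmod u = 1 \<Longrightarrow> rotm u \<in> SO2"
proof -
  assume "cmod u = 1"
  then have h: "Re u * Re u + Im u * Im u = 1" by (simp add: cmod1_iff power2_eq_square)
  have "transpose (rotm u) ** rotm u = mat 1"
    using h by (simp add: mat_eq2 mmult_entries mat1_entries transpose_def algebra_simps)
  moreover have "det (rotm u) = 1" using h by (simp add: det_2)
  ultimately show ?thesis by (simp add: SO2_def orthogonal_matrix)
qed

lemma det_rotm: "cmod u = 1 \<Longrightarrow> det (rotm u) = 1"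
  using rotm_SO2 SO2_def by auto

lemma carrier_mk: "x \<in> carrier SDP \<Longrightarrow> x = mk (Rc x) (Vc x) (Cc x) \<and> cmod (Rc x) = 1"
proof -
  assume "x \<in> carrier SDP"
  then have M: "fst x \<in> SO2" by (auto simp: SDP_simps)
  note c = SO2_char[OF M]
  have "fst x = rotm (Rc x)" using c by (simp add: mat_eq2 Rc_def)
  then have "x = mk (Rc x) (Vc x) (Cc x)"
    by (cases x) (auto simp: mk_def Vc_def Cc_def)
  moreover have "cmod (Rc x) = 1" using c(3) by (simp add: cmod1_iff Rc_def)
  ultimately show ?thesis by blast
qed

lemma mk_carrier [simp]: "mk u z c \<in> carrier SDP \<longleftrightarrow> cmod u = 1"
proof
  assume "mk u z c \<in> carrier SDP"
  then show "cmod u = 1" using carrier_mk[of "mk u z c"] by simp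
qed (simp add: SDP_simps mk_def rotm_SO2)

definition kap :: "complex \<Rightarrow> complex \<Rightarrow> complex \<Rightarrow> real" where
  "kap u z z' = - Re z' * Im z' / 2 + Re (u*z') * Im (u*z') / 2 + Re z * Im (u*z')"

lemma mk_mult: "cmod u = 1 \<Longrightarrow>
  mk u z c \<otimes>\<^bsub>SDP\<^esub> mk u' z' c' = mk (u*u') (z + u*z') (c + c' + kap u z z')"
  apply (simp add: SDP_simps mk_def det_rotm gl_act_def heis_mult_def kap_def)
  apply (simp add: mat_eq2 mmult_entries algebra_simps)
  done

lemma mk_one: "\<one>\<^bsub>SDP\<^esub> = mk 1 0 0"
  by (simp add: SDP_simps mk_def rotm_one)


lemma unit_cnj_mult: "cmod u = 1 \<Longrightarrow> cnj u * u = 1"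
  by (metis complex_norm_square mult.commute mult_1 of_real_1 power_one)

lemma unit_mult_cnj: "cmod u = 1 \<Longrightarrow> u * cnj u = 1"
  using unit_cnj_mult by (simp add: mult.commute)

interpretation SDPg: group SDP by (rule group_SDP)

lemma mk_inv: "cmod u = 1 \<Longrightarrow>
  inv\<^bsub>SDP\<^esub> (mk u z c) = mk (cnj u) (- cnj u * z) (- c - kap (cnj u) (- cnj u * z) z)"
proof -
  assume u: "cmod u = 1"
  have "mk (cnj u) (- cnj u * z) (- c - kap (cnj u) (- cnj u * z) z) \<otimes>\<^bsub>SDP\<^esub> mk u z c = \<one>\<^bsub>SDP\<^esub>"
    using u by (simp add: mk_mult mk_one unit_cnj_mult)
  then show ?thesis using u by (intro SDPg.inv_equality) auto
qed

lemma carrier_unit: "x \<in> carrier SDP \<Longrightarrow> cmod (Rc x) = 1"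
  using carrier_mk by blast

lemma mult_RVC:
  assumes "x \<in> carrier SDP" "y \<in> carrier SDP"
  shows "Rc (x \<otimes>\<^bsub>SDP\<^esub> y) = Rc x * Rc y"
    "Vc (x \<otimes>\<^bsub>SDP\<^esub> y) = Vc x + Rc x * Vc y"
    "Cc (x \<otimes>\<^bsub>SDP\<^esub> y) = Cc x + Cc y + kap (Rc x) (Vc x) (Vc y)"
proof -
  have e: "x \<otimes>\<^bsub>SDP\<^esub> y = mk (Rc x) (Vc x) (Cc x) \<otimes>\<^bsub>SDP\<^esub> mk (Rc y) (Vc y) (Cc y)"
    using carrier_mk assms by metis
  show "Rc (x \<otimes>\<^bsub>SDP\<^esub> y) = Rc x * Rc y"
    "Vc (x \<otimes>\<^bsub>SDP\<^esub> y) = Vc x + Rc x * Vc y"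
    "Cc (x \<otimes>\<^bsub>SDP\<^esub> y) = Cc x + Cc y + kap (Rc x) (Vc x) (Vc y)"
    unfolding e using carrier_unit[OF assms(1)] by (simp_all add: mk_mult)
qed

lemma inv_RV:
  assumes "x \<in> carrier SDP"
  shows "Rc (inv\<^bsub>SDP\<^esub> x) = cnj (Rc x)" "Vc (inv\<^bsub>SDP\<^esub> x) = - cnj (Rc x) * Vc x"
proof -
  have e: "inv\<^bsub>SDP\<^esub> x = inv\<^bsub>SDP\<^esub> (mk (Rc x) (Vc x) (Cc x))"
    using carrier_mk assms by metis
  show "Rc (inv\<^bsub>SDP\<^esub> x) = cnj (Rc x)" "Vc (inv\<^bsub>SDP\<^esub> x) = - cnj (Rc x) * Vc x"
    unfolding e using carrier_unit[OF assms(1)] by (simp_all add: mk_inv)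
qed

lemma mk_eq_iff: "mk u z c = mk u' z' c' \<longleftrightarrow> u = u' \<and> z = z' \<and> c = c'"
  by (metis RVC_mk)

lemma carrier_eq:
  assumes "x \<in> carrier SDP" "y \<in> carrier SDP"
  shows "x = y \<longleftrightarrow> Rc x = Rc y \<and> Vc x = Vc y \<and> Cc x = Cc y"
  using carrier_mk[OF assms(1)] carrier_mk[OF assms(2)] by metis

definition zc :: "real \<Rightarrow> sdp" where "zc c = mk 1 0 c"

lemma Zc_eq: "Zc = range zc"
  by (auto simp: Zc_def zc_def mk_def rotm_one)

lemma zc_carrier [simp]: "zc c \<in> carrier SDP"
  by (simp add: zc_def)

lemma zc_mult_left: "x \<in> carrier SDP \<Longrightarrow> zc c \<otimes>\<^bsub>SDP\<^esub> x = mk (Rc x) (Vc x) (Cc x + c)"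
  by (subst carrier_eq) (auto simp: zc_def mult_RVC kap_def carrier_unit)

lemma zc_mult_right: "x \<in> carrier SDP \<Longrightarrow> x \<otimes>\<^bsub>SDP\<^esub> zc c = mk (Rc x) (Vc x) (Cc x + c)"
  by (subst carrier_eq) (auto simp: zc_def mult_RVC kap_def carrier_unit)

lemma zc_central: "x \<in> carrier SDP \<Longrightarrow> zc c \<otimes>\<^bsub>SDP\<^esub> x = x \<otimes>\<^bsub>SDP\<^esub> zc c"
  by (simp add: zc_mult_left zc_mult_right)

lemma zc_add: "zc a \<otimes>\<^bsub>SDP\<^esub> zc b = zc (a + b)"
  by (simp add: zc_def mk_mult kap_def)

lemma zc_inv: "inv\<^bsub>SDP\<^esub> (zc a) = zc (- a)"
  by (simp add: zc_def mk_inv kap_def)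

lemma zc_one: "zc 0 = \<one>\<^bsub>SDP\<^esub>"
  by (simp add: zc_def mk_one)

definition om :: "complex \<Rightarrow> complex \<Rightarrow> real" where
  "om p q = Re p * Im q - Im p * Re q"

lemma comm_N:
  assumes "x \<in> carrier SDP" "y \<in> carrier SDP" "Rc x = 1" "Rc y = 1"
  shows "x \<otimes>\<^bsub>SDP\<^esub> y \<otimes>\<^bsub>SDP\<^esub> inv\<^bsub>SDP\<^esub> x \<otimes>\<^bsub>SDP\<^esub> inv\<^bsub>SDP\<^esub> y = zc (om (Vc x) (Vc y))"
proof -
  obtain p c q d where ex: "x = mk 1 p c" and ey: "y = mk 1 q d"
    using carrier_mk assms by metis
  show ?thesis
    unfolding ex ey
    by (simp add: mk_inv mk_mult zc_def kap_def om_def algebra_simps)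
qed


declare one_FactGroup[simp del] mult_FactGroup[simp del]

locale WL =
  fixes D :: "sdp set" and phi :: "sdp set \<Rightarrow> sdp set"
  assumes sub: "subgroup D SDP" and DZ: "D \<subseteq> Zc"
    and disc: "\<exists>e>0. \<forall>c. zc c \<in> D \<and> \<bar>c\<bar> < e \<longrightarrow> c = 0"
    and infD: "infinite D"
    and iso: "phi \<in> iso (SDP Mod D) (SDP Mod D)"
begin

abbreviation W where "W \<equiv> SDP Mod D"
definition pr :: "sdp \<Rightarrow> sdp set" where "pr x = D #>\<^bsub>SDP\<^esub> x"
definition D0 :: "real set" where "D0 = {c. zc c \<in> D}"

lemma normalD: "D \<lhd> SDP"
proof -
  have "\<forall>x\<in>carrier SDP. \<forall>h\<in>D. x \<otimes>\<^bsub>SDP\<^esub> h \<otimes>\<^bsub>SDP\<^esub> inv\<^bsub>SDP\<^esub> x \<in> D"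
  proof (intro ballI)
    fix x h assume x: "x \<in> carrier SDP" and h: "h \<in> D"
    then obtain c where hc: "h = zc c" using DZ Zc_eq by auto
    have "x \<otimes>\<^bsub>SDP\<^esub> h \<otimes>\<^bsub>SDP\<^esub> inv\<^bsub>SDP\<^esub> x = h"
      using x by (simp add: hc zc_central[symmetric] SDPg.m_assoc)
    then show "x \<otimes>\<^bsub>SDP\<^esub> h \<otimes>\<^bsub>SDP\<^esub> inv\<^bsub>SDP\<^esub> x \<in> D" using h by simp
  qed
  then show ?thesis using sub SDPg.normal_inv_iff by blast
qed

interpretation N: normal D SDP by (rule normalD)

lemma groupW: "group W" by (rule N.factorgroup_is_group)

interpretation Wg: group W by (rule groupW)

lemma D_sub: "D \<subseteq> carrier SDP" using sub subgroup.subset by blast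

lemma pr_hom: "pr \<in> hom SDP W"
  using N.r_coset_hom_Mod unfolding pr_def .

interpretation prh: group_hom SDP W pr
  by (simp add: group_hom_def group_hom_axioms_def groupW group_SDP pr_hom)

lemma carrierW: "carrier W = pr ` carrier SDP"
  by (simp add: carrier_FactGroup pr_def)

lemma peq:
  assumes x: "x \<in> carrier SDP" and y: "y \<in> carrier SDP"
  shows "pr x = pr y \<longleftrightarrow> Rc x = Rc y \<and> Vc x = Vc y \<and> Cc x - Cc y \<in> D0"
proof
  assume "pr x = pr y"
  then have "x \<in> D #>\<^bsub>SDP\<^esub> y" using SDPg.repr_independenceD[OF sub x] by (simp add: pr_def)
  then obtain h where h: "h \<in> D" "x = h \<otimes>\<^bsub>SDP\<^esub> y" by (auto simp: r_coset_def)
  then obtain c where hc: "h = zc c" using DZ Zc_eq by auto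
  have "x = mk (Rc y) (Vc y) (Cc y + c)" using h hc y by (simp add: zc_mult_left)
  then show "Rc x = Rc y \<and> Vc x = Vc y \<and> Cc x - Cc y \<in> D0"
    using h hc by (simp add: D0_def)
next
  assume a: "Rc x = Rc y \<and> Vc x = Vc y \<and> Cc x - Cc y \<in> D0"
  have "x = zc (Cc x - Cc y) \<otimes>\<^bsub>SDP\<^esub> y"
    using a x y by (subst carrier_eq) (auto simp: zc_mult_left carrier_unit)
  moreover have "zc (Cc x - Cc y) \<in> D" using a by (simp add: D0_def)
  ultimately have "x \<in> D #>\<^bsub>SDP\<^esub> y" by (auto simp: r_coset_def)
  then show "pr x = pr y" using SDPg.repr_independence[OF _ y sub] by (simp add: pr_def)
qed

lemma phi_hom: "phi \<in> hom W W" using iso by (simp add: iso_def)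

interpretation phih: group_hom W W phi
  by (simp add: group_hom_def group_hom_axioms_def groupW phi_hom)

definition Phi :: "sdp \<Rightarrow> sdp" where
  "Phi x = (SOME y. y \<in> carrier SDP \<and> pr y = phi (pr x))"

lemma Phi: assumes "x \<in> carrier SDP" shows "Phi x \<in> carrier SDP" "pr (Phi x) = phi (pr x)"
proof -
  have "phi (pr x) \<in> carrier W" using assms by simp
  then obtain z where "z \<in> carrier SDP" "phi (pr x) = pr z" using carrierW by (metis imageE)
  then have "\<exists>y. y \<in> carrier SDP \<and> pr y = phi (pr x)" by metis
  then have "Phi x \<in> carrier SDP \<and> pr (Phi x) = phi (pr x)"
    unfolding Phi_def by (rule someI_ex)
  then show "Phi x \<in> carrier SDP" "pr (Phi x) = phi (pr x)" by auto
qed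

lemma Phi_mult: assumes "x \<in> carrier SDP" "y \<in> carrier SDP"
  shows "pr (Phi (x \<otimes>\<^bsub>SDP\<^esub> y)) = pr (Phi x \<otimes>\<^bsub>SDP\<^esub> Phi y)"
proof -
  have "pr (Phi (x \<otimes>\<^bsub>SDP\<^esub> y)) = phi (pr x \<otimes>\<^bsub>W\<^esub> pr y)"
    using assms by (simp add: Phi)
  also have "\<dots> = phi (pr x) \<otimes>\<^bsub>W\<^esub> phi (pr y)" using assms by simp
  also have "\<dots> = pr (Phi x) \<otimes>\<^bsub>W\<^esub> pr (Phi y)" using assms by (simp add: Phi)
  also have "\<dots> = pr (Phi x \<otimes>\<^bsub>SDP\<^esub> Phi y)" using assms by (simp add: Phi)
  finally show ?thesis .
qed

lemma Phi_one: "pr (Phi \<one>\<^bsub>SDP\<^esub>) = pr \<one>\<^bsub>SDP\<^esub>"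
  by (simp add: Phi)

lemma Phi_inv: assumes "x \<in> carrier SDP"
  shows "pr (Phi (inv\<^bsub>SDP\<^esub> x)) = pr (inv\<^bsub>SDP\<^esub> (Phi x))"
proof -
  have "pr (Phi (inv\<^bsub>SDP\<^esub> x)) = phi (inv\<^bsub>W\<^esub> (pr x))"
    using assms by (simp add: Phi)
  also have "\<dots> = inv\<^bsub>W\<^esub> (phi (pr x))" using assms by simp
  also have "\<dots> = inv\<^bsub>W\<^esub> (pr (Phi x))" using assms by (simp add: Phi)
  also have "\<dots> = pr (inv\<^bsub>SDP\<^esub> (Phi x))" using assms by (simp add: Phi)
  finally show ?thesis .
qed

lemma Phi_inj: assumes "x \<in> carrier SDP" "pr (Phi x) = pr \<one>\<^bsub>SDP\<^esub>"
  shows "pr x = pr \<one>\<^bsub>SDP\<^esub>"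
proof -
  have "phi (pr x) = phi (pr \<one>\<^bsub>SDP\<^esub>)" using assms Phi_one by (simp add: Phi)
  moreover have "inj_on phi (carrier W)" using iso by (simp add: iso_def bij_betw_def)
  ultimately show ?thesis using assms by (meson inj_on_def prh.hom_closed SDPg.one_closed)
qed

definition rr where "rr x = Rc (Phi x)"
definition vv where "vv x = Vc (Phi x)"

lemma rr_unit: "x \<in> carrier SDP \<Longrightarrow> cmod (rr x) = 1"
  by (simp add: rr_def Phi carrier_unit)

lemma rv_mult: assumes "x \<in> carrier SDP" "y \<in> carrier SDP"
  shows "rr (x \<otimes>\<^bsub>SDP\<^esub> y) = rr x * rr y" "vv (x \<otimes>\<^bsub>SDP\<^esub> y) = vv x + rr x * vv y"
  using Phi_mult[OF assms] peq[of "Phi (x \<otimes>\<^bsub>SDP\<^esub> y)" "Phi x \<otimes>\<^bsub>SDP\<^esub> Phi y"] assms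
  by (simp_all add: Phi rr_def vv_def mult_RVC)

lemma rv_one: "rr \<one>\<^bsub>SDP\<^esub> = 1" "vv \<one>\<^bsub>SDP\<^esub> = 0"
  using Phi_one peq[of "Phi \<one>\<^bsub>SDP\<^esub>" "\<one>\<^bsub>SDP\<^esub>"]
  by (simp_all add: Phi rr_def vv_def mk_one)

lemma rv_inv: assumes "x \<in> carrier SDP"
  shows "rr (inv\<^bsub>SDP\<^esub> x) = cnj (rr x)" "vv (inv\<^bsub>SDP\<^esub> x) = - cnj (rr x) * vv x"
  using Phi_inv[OF assms] peq[of "Phi (inv\<^bsub>SDP\<^esub> x)" "inv\<^bsub>SDP\<^esub> (Phi x)"] assms
  by (simp_all add: Phi rr_def vv_def inv_RV)

end




definition comm :: "sdp \<Rightarrow> sdp \<Rightarrow> sdp" where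
  "comm a b = a \<otimes>\<^bsub>SDP\<^esub> b \<otimes>\<^bsub>SDP\<^esub> inv\<^bsub>SDP\<^esub> a \<otimes>\<^bsub>SDP\<^esub> inv\<^bsub>SDP\<^esub> b"

lemma comm_carrier [simp]: "a \<in> carrier SDP \<Longrightarrow> b \<in> carrier SDP \<Longrightarrow> comm a b \<in> carrier SDP"
  by (simp add: comm_def)

lemma mk_carrierI: "cmod u = 1 \<Longrightarrow> mk u z c \<in> carrier SDP" by simp

context WL
begin

interpretation N: normal D SDP by (rule normalD)
interpretation Wg: group W by (rule groupW)
interpretation prh: group_hom SDP W pr
  by (simp add: group_hom_def group_hom_axioms_def groupW group_SDP pr_hom)
interpretation phih: group_hom W W phi
  by (simp add: group_hom_def group_hom_axioms_def groupW phi_hom)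

lemma rr_comm: assumes "a \<in> carrier SDP" "b \<in> carrier SDP" shows "rr (comm a b) = 1"
proof -
  have "rr (comm a b) = (rr a * cnj (rr a)) * (rr b * cnj (rr b))"
    using assms by (simp add: comm_def rv_mult rv_inv)
  then show ?thesis using assms by (simp add: rr_unit unit_mult_cnj)
qed

lemma vv_comm: assumes "a \<in> carrier SDP" "b \<in> carrier SDP" "rr a = 1" "rr b = 1"
  shows "vv (comm a b) = 0"
  using assms by (simp add: comm_def rv_mult rv_inv)

lemma zc_comm: "zc c = comm (mk 1 1 0) (mk 1 (\<i> * complex_of_real c) 0)"
  by (simp add: comm_def comm_N om_def)

lemma rr_N: assumes x: "x \<in> carrier SDP" and r: "Rc x = 1" shows "rr x = 1"
proof -
  define J where "J = mk \<i> 0 0"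
  define h where "h = mk 1 (Vc x / (\<i> - 1)) 0"
  have J: "J \<in> carrier SDP" "Rc J = \<i>" "Vc J = 0" by (simp_all add: J_def)
  have h: "h \<in> carrier SDP" "Rc h = 1" "Vc h = Vc x / (\<i> - 1)" by (simp_all add: h_def)
  have "\<i> - 1 \<noteq> (0::complex)" by (simp add: complex_eq_iff)
  then have vc1: "Vc (comm J h) = Vc x"
    using J h by (simp add: comm_def mult_RVC inv_RV field_simps)
  have rc1: "Rc (comm J h) = 1"
    using J h by (simp add: comm_def mult_RVC inv_RV)
  define d where "d = Cc x - Cc (comm J h)"
  have e: "x = comm J h \<otimes>\<^bsub>SDP\<^esub> zc d"
    using J h x r vc1 rc1 by (subst carrier_eq) (auto simp: zc_mult_right d_def carrier_unit)
  have "rr (comm J h \<otimes>\<^bsub>SDP\<^esub> zc d) = rr (comm J h) * rr (zc d)" using J h by (simp add: rv_mult)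
  then have "rr x = rr (comm J h) * rr (zc d)" using e by metis
  also have "\<dots> = 1" using J h by (simp add: rr_comm zc_comm[of d])
  finally show ?thesis .
qed

definition sf where "sf u = rr (mk u 0 0)"

lemma rr_sf: assumes x: "x \<in> carrier SDP" shows "rr x = sf (Rc x)"
proof -
  define g where "g = mk (Rc x) 0 0"
  have g: "g \<in> carrier SDP" "Rc g = Rc x" using x by (simp_all add: g_def carrier_unit)
  have "Rc (x \<otimes>\<^bsub>SDP\<^esub> inv\<^bsub>SDP\<^esub> g) = 1"
    using x g by (simp add: mult_RVC inv_RV unit_mult_cnj carrier_unit)
  then have "rr (x \<otimes>\<^bsub>SDP\<^esub> inv\<^bsub>SDP\<^esub> g) = 1" using x g by (intro rr_N) auto
  then have "rr x * cnj (rr g) = 1" using x g by (simp add: rv_mult rv_inv)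
  then have "rr x * cnj (rr g) * rr g = rr g" by simp
  then have "rr x = rr g" using g by (simp add: rr_unit unit_cnj_mult mult.assoc)
  then show ?thesis by (simp add: sf_def g_def)
qed

lemma sf_unit: "cmod u = 1 \<Longrightarrow> cmod (sf u) = 1"
  by (simp add: sf_def rr_unit)

lemma sf_mult: "cmod u = 1 \<Longrightarrow> cmod u' = 1 \<Longrightarrow> sf (u * u') = sf u * sf u'"
proof -
  assume u: "cmod u = 1" "cmod u' = 1"
  have "rr (mk u 0 0 \<otimes>\<^bsub>SDP\<^esub> mk u' 0 0) = sf u * sf u'" using u by (simp add: rv_mult sf_def)
  moreover have "mk u 0 0 \<otimes>\<^bsub>SDP\<^esub> mk u' 0 0 = mk (u*u') 0 0" using u by (simp add: mk_mult kap_def)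
  ultimately show ?thesis by (simp add: sf_def)
qed

definition Af where "Af z = vv (mk 1 z 0)"

lemma rv_zc: "rr (zc c) = 1" "vv (zc c) = 0"
  by (simp_all add: zc_comm[of c] rr_comm vv_comm rr_N)

lemma vv_N: assumes x: "x \<in> carrier SDP" and r: "Rc x = 1" shows "vv x = Af (Vc x)"
proof -
  have e: "x = mk 1 (Vc x) 0 \<otimes>\<^bsub>SDP\<^esub> zc (Cc x)"
    using x r by (subst carrier_eq) (auto simp: zc_mult_right)
  have "vv (mk 1 (Vc x) 0 \<otimes>\<^bsub>SDP\<^esub> zc (Cc x)) = vv (mk 1 (Vc x) 0) + rr (mk 1 (Vc x) 0) * vv (zc (Cc x))"
    by (simp add: rv_mult)
  then have "vv x = vv (mk 1 (Vc x) 0) + rr (mk 1 (Vc x) 0) * vv (zc (Cc x))"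
    using e by metis
  then show ?thesis by (simp add: rv_zc Af_def)
qed

lemma Af_add: "Af (z + z') = Af z + Af z'"
proof -
  have "Af (z + z') = vv (mk 1 z 0 \<otimes>\<^bsub>SDP\<^esub> mk 1 z' 0)"
    by (subst vv_N) (simp_all add: mult_RVC)
  also have "\<dots> = Af z + Af z'" by (simp add: rv_mult Af_def rr_N)
  finally show ?thesis .
qed

lemma Af_conj: assumes u: "cmod u = 1" shows "Af (u * z) = sf u * Af z"
proof -
  define g where "g = mk u 0 0"
  have g: "g \<in> carrier SDP" "Rc g = u" "Vc g = 0" "rr g = sf u" using u by (simp_all add: g_def sf_def)
  have n: "mk 1 z 0 \<in> carrier SDP" by simp
  have "Af (u * z) = vv (g \<otimes>\<^bsub>SDP\<^esub> mk 1 z 0 \<otimes>\<^bsub>SDP\<^esub> inv\<^bsub>SDP\<^esub> g)"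
    using g u by (subst vv_N) (simp_all add: mult_RVC inv_RV unit_mult_cnj)
  also have "\<dots> = vv g + sf u * Af z + sf u * (- cnj (sf u) * vv g)"
    using g n by (simp add: rv_mult rv_inv Af_def rr_N)
  also have "\<dots> = sf u * Af z" using sf_unit[OF u]
    by (simp add: algebra_simps unit_mult_cnj)
  finally show ?thesis .
qed

lemma rho_hom: "(\<lambda>x. phi (pr x)) \<in> hom SDP W"
  using hom_compose[OF pr_hom phi_hom] by (simp add: comp_def)

lemma Phi_comm: assumes "a \<in> carrier SDP" "b \<in> carrier SDP"
  shows "pr (Phi (comm a b)) = pr (comm (Phi a) (Phi b))"
proof -
  interpret rh: group_hom SDP W "\<lambda>x. phi (pr x)"
    by (simp add: group_hom_def group_hom_axioms_def groupW group_SDP rho_hom)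
  show ?thesis using assms by (simp add: comm_def Phi)
qed

lemma Phi_zc: "pr (Phi (zc (om v1 v2))) = pr (zc (om (Af v1) (Af v2)))"
proof -
  have "zc (om v1 v2) = comm (mk 1 v1 0) (mk 1 v2 0)" by (simp add: comm_def comm_N)
  then have "pr (Phi (zc (om v1 v2))) = pr (comm (Phi (mk 1 v1 0)) (Phi (mk 1 v2 0)))"
    by (simp add: Phi_comm)
  also have "comm (Phi (mk 1 v1 0)) (Phi (mk 1 v2 0)) = zc (om (Af v1) (Af v2))"
    unfolding comm_def
    by (subst comm_N) (simp_all add: Phi rr_N[unfolded rr_def] Af_def vv_def[symmetric])
  finally show ?thesis .
qed

lemma pr_Phi_cong: "x \<in> carrier SDP \<Longrightarrow> y \<in> carrier SDP \<Longrightarrow> pr x = pr y \<Longrightarrow> pr (Phi x) = pr (Phi y)"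
  by (simp add: Phi)

lemma pr_zc_one: "pr (zc c) = pr \<one>\<^bsub>SDP\<^esub> \<longleftrightarrow> c \<in> D0"
  by (simp add: peq mk_one zc_def)

lemma Af_nonzero: "\<exists>z. Af z \<noteq> 0"
proof (rule ccontr)
  assume "\<not> (\<exists>z. Af z \<noteq> 0)"
  then have A0: "Af z = 0" for z by auto
  have "c \<in> D0" for c
  proof -
    have om1: "om 1 (\<i> * complex_of_real c) = c" by (simp add: om_def)
    have om2: "om (Af 1) (Af (\<i> * complex_of_real c)) = 0" unfolding A0 by (simp add: om_def)
    have "pr (Phi (zc c)) = pr (zc 0)" using Phi_zc[of 1 "\<i> * complex_of_real c"] unfolding om1 om2 .
    then have "pr (Phi (zc c)) = pr \<one>\<^bsub>SDP\<^esub>" by (simp only: zc_one)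
    then have "pr (zc c) = pr \<one>\<^bsub>SDP\<^esub>" using Phi_inj[of "zc c"] by simp
    then show ?thesis by (simp only: pr_zc_one)
  qed
  moreover obtain e where e: "e > 0" "\<forall>c. zc c \<in> D \<and> \<bar>c\<bar> < e \<longrightarrow> c = 0" using disc by auto
  ultimately have "zc (e/2) \<in> D" by (simp add: D0_def)
  then have "e/2 = 0" using e by auto
  then show False using e by simp
qed

end




lemma addhom_basic:
  fixes g :: "'a::ring_1 \<Rightarrow> 'b::ring_1"
  assumes add: "\<And>x y. g (x + y) = g x + g y"
  shows "g 0 = 0" "g (- x) = - g x" "g (of_nat n * x) = of_nat n * g x"
    "g (of_int k * x) = of_int k * g x"
proof -
  show g0: "g 0 = 0" using add[of 0 0] by simp
  show gn: "g (- x) = - g x" for x using add[of x "-x"] g0 by (simp add: eq_neg_iff_add_eq_0 add.commute)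
  show gnat: "g (of_nat n * x) = of_nat n * g x" for n
    by (induction n) (simp_all add: g0 add distrib_right)
  show "g (of_int k * x) = of_int k * g x"
  proof (cases "k \<ge> 0")
    case True then show ?thesis using gnat[of "nat k"] by simp
  next
    case False
    then have "of_int k * x = - (of_nat (nat (-k)) * x)" by simp
    then show ?thesis using gnat[of "nat (-k)"] gn False by simp
  qed
qed

lemma real_ring_hom_id:
  fixes g :: "real \<Rightarrow> real"
  assumes add: "\<And>x y. g (x + y) = g x + g y"
    and mult: "\<And>x y. g (x * y) = g x * g y" and one: "g 1 = 1"
  shows "g x = x"
proof -
  note b = addhom_basic[of g, OF add]
  have gi: "g (of_int k) = of_int k" for k using b(4)[of k 1] one by simp
  have gq: "g q = q" if "q \<in> \<rat>" for q
  proof -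
    have "q \<in> {real_of_int i / real_of_int j | i j. j \<noteq> 0}" using that Rats_eq_int_div_int by blast
    then obtain a b where ab: "q = of_int a / of_int b" "b \<noteq> 0" by blast
    have "q * of_int b = of_int a" using ab by simp
    then have "g q * g (of_int b) = g (of_int a)" using mult[of q "of_int b"] by simp
    then have "g q * of_int b = of_int a" using gi by simp
    then have "g q = of_int a / of_int b" using ab(2) by (simp add: field_simps)
    with ab(1) show ?thesis by simp
  qed
  have pos: "g y \<ge> 0" if "y \<ge> 0" for y
  proof -
    have "y = sqrt y * sqrt y" using that by simp
    then have "g y = g (sqrt y) * g (sqrt y)" using mult by metis
    then show ?thesis by simp
  qed
  have mono: "g a \<le> g b" if "a \<le> b" for a b
  proof -
    have "g b = g a + g (b - a)" using add[of a "b - a"] by simp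
    then show ?thesis using pos[of "b - a"] that by simp
  qed
  show "g x = x"
  proof (rule ccontr)
    assume "g x \<noteq> x"
    then consider "g x < x" | "x < g x" by linarith
    then show False
    proof cases
      case 1
      then obtain q where "q \<in> \<rat>" "g x < q" "q < x" using Rats_dense_in_real by blast
      then show False using mono[of q x] gq by simp
    next
      case 2
      then obtain q where "q \<in> \<rat>" "x < q" "q < g x" using Rats_dense_in_real by blast
      then show False using mono[of x q] gq by simp
    qed
  qed
qed

lemma real_as_nat_times:
  fixes r :: real
  shows "\<exists>n::nat. \<exists>r0. \<bar>r0\<bar> \<le> 2 \<and> r = of_nat n * r0"
proof -
  obtain n :: nat where n0: "\<bar>r\<bar> < real n" using reals_Archimedean2 by blast
  have npos: "real n > 0" using n0 by linarith
  have "\<bar>r\<bar> / real n \<le> 1" by (subst divide_le_eq_1_pos[OF npos]) (use n0 in linarith)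
  moreover have "\<bar>r / real n\<bar> = \<bar>r\<bar> / real n" by (metis abs_divide abs_of_pos npos)
  ultimately have "\<bar>r / real n\<bar> \<le> 2" by linarith
  moreover have "r = real n * (r / real n)" using npos by simp
  ultimately show ?thesis by (intro exI[of _ n] exI[of _ "r / real n"] conjI)
qed

lemma real_as_unit_sum:
  fixes r :: real
  assumes "\<bar>r\<bar> \<le> 2"
  shows "\<exists>u. cmod u = 1 \<and> complex_of_real r = u + cnj u"
proof -
  define a where "a = r / 2"
  have a: "\<bar>a\<bar> \<le> 1" using assms by (simp add: a_def)
  have "a * a \<le> 1" using a by (metis abs_mult_self_eq mult_le_one abs_ge_zero)
  then have h: "0 \<le> 1 - a * a" by simp
  define u where "u = Complex a (sqrt (1 - a * a))"
  have "(sqrt (1 - a * a))^2 = 1 - a * a" using h by simp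
  then have "(Re u)^2 + (Im u)^2 = 1" by (simp add: u_def power2_eq_square)
  then have "cmod u = 1" by (simp add: cmod_def)
  moreover have "complex_of_real r = u + cnj u" by (simp add: u_def complex_eq_iff a_def)
  ultimately show ?thesis by blast
qed


lemma unit_mult_cnj': "cmod u = 1 \<Longrightarrow> u * cnj u = 1"
  by (metis complex_norm_square mult_1 of_real_1 power_one)

lemma cplx_class:
  fixes A s :: "complex \<Rightarrow> complex"
  assumes add: "\<And>z z'. A (z + z') = A z + A z'"
    and cj: "\<And>u z. cmod u = 1 \<Longrightarrow> A (u*z) = s u * A z"
    and su: "\<And>u. cmod u = 1 \<Longrightarrow> cmod (s u) = 1"
    and sm: "\<And>u u'. cmod u = 1 \<Longrightarrow> cmod u' = 1 \<Longrightarrow> s (u*u') = s u * s u'"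
    and nz: "\<exists>z. A z \<noteq> 0"
  shows "(\<forall>u. cmod u = 1 \<longrightarrow> s u = u) \<or>
         (\<exists>w. w \<noteq> 0 \<and> (\<forall>z. A z = w * cnj z) \<and> (\<forall>u. cmod u = 1 \<longrightarrow> s u = cnj u))"
proof -
  note b = addhom_basic[of A, OF add]
  have s1: "s 1 = 1"
  proof -
    have "s 1 = s 1 * s 1" using sm[of 1 1] by simp
    moreover have "s 1 \<noteq> 0" using su[of 1] by auto
    ultimately show ?thesis by (metis mult_cancel_left1)
  qed
  have scnj: "s (cnj u) = cnj (s u)" if u: "cmod u = 1" for u
  proof -
    have "s u * s (cnj u) = s (u * cnj u)" using sm[of u "cnj u"] u by simp
    also have "\<dots> = 1" using u s1 by (simp add: unit_mult_cnj')
    also have "\<dots> = s u * cnj (s u)" using su[OF u] by (simp add: unit_mult_cnj')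
    finally have "s u * s (cnj u) = s u * cnj (s u)" .
    moreover have "s u \<noteq> 0" using su[OF u] by auto
    ultimately show ?thesis by simp
  qed
  have small: "\<exists>t::real. \<forall>z. A (of_real r * z) = of_real t * A z" if r: "\<bar>r\<bar> \<le> 2" for r
  proof -
    obtain u where u: "cmod u = 1" "complex_of_real r = u + cnj u" using real_as_unit_sum[OF r] by blast
    have "A (of_real r * z) = of_real (2 * Re (s u)) * A z" for z
    proof -
      have "A (of_real r * z) = A (u * z + cnj u * z)" using u by (simp add: distrib_right)
      also have "\<dots> = (s u + cnj (s u)) * A z" using u by (simp add: add cj scnj distrib_right)
      also have "\<dots> = of_real (2 * Re (s u)) * A z" by (simp add: complex_add_cnj)
      finally show ?thesis .
    qed
    then show ?thesis by blast
  qed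
  have key: "\<exists>t::real. \<forall>z. A (of_real r * z) = of_real t * A z" for r
  proof -
    obtain n :: nat and r0 where nr: "\<bar>r0\<bar> \<le> 2" "r = of_nat n * r0" using real_as_nat_times by blast
    obtain t0 where t0: "\<forall>z. A (of_real r0 * z) = of_real t0 * A z" using small[OF nr(1)] by blast
    have "A (of_real r * z) = of_real (of_nat n * t0) * A z" for z
    proof -
      have e: "of_real r * z = of_nat n * (of_real r0 * z)" using nr(2) by simp
      have "A (of_real r * z) = of_nat n * A (of_real r0 * z)" unfolding e by (rule b(3))
      then show ?thesis using t0 by simp
    qed
    then show ?thesis by blast
  qed
  define w where "w = A 1"
  have decomp: "z = of_real (Re z) * 1 + \<i> * of_real (Im z)" for z by (simp add: complex_eq_iff)
  have w0: "w \<noteq> 0"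
  proof
    assume w: "w = 0"
    have Ar: "A (of_real r) = 0" for r using key[of r] w unfolding w_def by (metis mult_1_right mult_zero_right)
    have "A z = 0" for z
    proof -
      have "A z = A (of_real (Re z) * 1) + A (\<i> * of_real (Im z))" using decomp[of z] add by metis
      also have "\<dots> = 0" using Ar cj[of \<i> "of_real (Im z)"] by simp
      finally show ?thesis .
    qed
    then show False using nz by blast
  qed
  define g where "g r = Re (A (of_real r) / w)" for r
  have gA: "A (of_real r * z) = of_real (g r) * A z" for r z
  proof -
    obtain t where t: "\<forall>z. A (of_real r * z) = of_real t * A z" using key by blast
    have "A (of_real r) = of_real t * w" using t[rule_format, of 1] by (simp add: w_def)
    then have "g r = t" using w0 by (simp add: g_def)
    then show ?thesis using t by simp
  qed
  have gw: "A (of_real r) = of_real (g r) * w" for r using gA[of r 1] by (simp add: w_def)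
  have gadd: "g (x + y) = g x + g y" for x y
  proof -
    have "of_real (g (x + y)) * w = of_real (g x + g y) * w"
      using gw[of "x+y"] gw[of x] gw[of y] add[of "of_real x" "of_real y"] by (simp add: distrib_right)
    then have "complex_of_real (g (x + y)) = complex_of_real (g x + g y)" using w0 by simp
    then show ?thesis using of_real_eq_iff by blast
  qed
  have gmult: "g (x * y) = g x * g y" for x y
  proof -
    have "of_real (g (x * y)) * w = A (of_real x * of_real y)" using gw[of "x*y"] by simp
    also have "\<dots> = of_real (g x) * A (of_real y)" by (rule gA)
    also have "\<dots> = of_real (g x * g y) * w" using gw[of y] by simp
    finally have "of_real (g (x * y)) * w = of_real (g x * g y) * w" .
    then have "complex_of_real (g (x * y)) = complex_of_real (g x * g y)" using w0 by simp
    then show ?thesis using of_real_eq_iff by blast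
  qed
  have g1: "g 1 = 1" using w0 by (simp add: g_def w_def)
  have gid: "g r = r" for r using real_ring_hom_id[of g, OF gadd gmult g1] .
  have Aform: "A z = of_real (Re z) * w + s \<i> * of_real (Im z) * w" for z
  proof -
    have "A z = A (of_real (Re z) * 1) + A (\<i> * of_real (Im z))" using decomp[of z] add by metis
    then show ?thesis using gA[of "Re z" 1] gw[of "Im z"] cj[of \<i> "of_real (Im z)"] gid
      by (simp add: w_def)
  qed
  have sm1: "s (-1) = -1"
  proof -
    have "A (-1 * 1) = s (-1) * w" using cj[of "-1" 1] by (simp add: w_def)
    moreover have "A (-1 * 1) = - w" using gw[of "-1"] gid by simp
    ultimately show ?thesis using w0 by (metis mult_cancel_right mult_minus_left mult_1)
  qed
  have "s \<i> * s \<i> = -1" using sm[of \<i> \<i>] sm1 by simp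
  then have "(s \<i> - \<i>) * (s \<i> + \<i>) = 0" by (simp add: algebra_simps)
  then have "s \<i> = \<i> \<or> s \<i> = - \<i>" by (simp add: eq_neg_iff_add_eq_0)
  then show ?thesis
  proof
    assume si: "s \<i> = \<i>"
    have Az: "A z = w * z" for z using Aform[of z] si
      by (subst (2) decomp) (simp add: algebra_simps)
    have "s u = u" if "cmod u = 1" for u
    proof -
      show ?thesis using cj[OF that, of 1] Az[of u] w0 unfolding w_def by (simp add: mult.commute)
    qed
    then show ?thesis by blast
  next
    assume si: "s \<i> = - \<i>"
    have Az: "A z = w * cnj z" for z using Aform[of z] si
      by (simp add: complex_eq_iff algebra_simps)
    have "s u = cnj u" if "cmod u = 1" for u
    proof -
      show ?thesis using cj[OF that, of 1] Az[of u] w0 unfolding w_def by (simp add: mult.commute)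
    qed
    then show ?thesis using Az w0 by blast
  qed
qed




context WL
begin

interpretation N: normal D SDP by (rule normalD)
interpretation Wg: group W by (rule groupW)
interpretation prh: group_hom SDP W pr
  by (simp add: group_hom_def group_hom_axioms_def groupW group_SDP pr_hom)
interpretation phih: group_hom W W phi
  by (simp add: group_hom_def group_hom_axioms_def groupW phi_hom)

lemma twisted_rep:
  assumes "(pr x, pr y) \<in> twisted_conj W phi" "x \<in> carrier SDP"
  shows "\<exists>g\<in>carrier SDP. pr y = pr (g \<otimes>\<^bsub>SDP\<^esub> x \<otimes>\<^bsub>SDP\<^esub> inv\<^bsub>SDP\<^esub> (Phi g))"
proof -
  obtain G where G: "G \<in> carrier W" "pr y = G \<otimes>\<^bsub>W\<^esub> pr x \<otimes>\<^bsub>W\<^esub> inv\<^bsub>W\<^esub> (phi G)"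
    using assms(1) unfolding twisted_conj_def by blast
  obtain g where g: "g \<in> carrier SDP" "G = pr g" using G(1) carrierW by auto
  have "pr (g \<otimes>\<^bsub>SDP\<^esub> x \<otimes>\<^bsub>SDP\<^esub> inv\<^bsub>SDP\<^esub> (Phi g)) = pr g \<otimes>\<^bsub>W\<^esub> pr x \<otimes>\<^bsub>W\<^esub> inv\<^bsub>W\<^esub> (pr (Phi g))"
    using g assms(2) by (simp add: Phi)
  also have "\<dots> = pr y" using G g by (simp add: Phi)
  finally show ?thesis using g by metis
qed

lemma twisted_refl: "x \<in> carrier SDP \<Longrightarrow> (pr x, pr x) \<in> twisted_conj W phi"
  unfolding twisted_conj_def
  by (auto intro!: bexI[of _ "\<one>\<^bsub>W\<^esub>"])

lemma class_inj_infinite: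
  assumes "infinite S" "\<And>i. i \<in> S \<Longrightarrow> f i \<in> carrier SDP"
    and "\<And>i j. i \<in> S \<Longrightarrow> j \<in> S \<Longrightarrow> (pr (f i), pr (f j)) \<in> twisted_conj W phi \<Longrightarrow> i = j"
  shows "infinite (carrier W // twisted_conj W phi)"
proof
  assume fin: "finite (carrier W // twisted_conj W phi)"
  define cl where "cl i = twisted_conj W phi `` {pr (f i)}" for i
  have sub: "cl ` S \<subseteq> carrier W // twisted_conj W phi"
    using assms(2) by (auto simp: cl_def intro!: quotientI)
  have "inj_on cl S"
  proof (rule inj_onI)
    fix i j assume ij: "i \<in> S" "j \<in> S" "cl i = cl j"
    have "pr (f j) \<in> cl j" using twisted_refl[OF assms(2)[OF ij(2)]] by (simp add: cl_def)
    then have "pr (f j) \<in> cl i" using ij by simp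
    then have "(pr (f i), pr (f j)) \<in> twisted_conj W phi" by (simp add: cl_def)
    then show "i = j" using assms(3) ij by blast
  qed
  then have "finite S" using finite_subset[OF sub fin] finite_imageD by blast
  then show False using assms(1) by simp
qed


lemma tw_RV:
  assumes g: "g \<in> carrier SDP" and x: "x \<in> carrier SDP"
  shows "Rc (g \<otimes>\<^bsub>SDP\<^esub> x \<otimes>\<^bsub>SDP\<^esub> inv\<^bsub>SDP\<^esub> (Phi g)) = Rc g * Rc x * cnj (sf (Rc g))"
    "Vc (g \<otimes>\<^bsub>SDP\<^esub> x \<otimes>\<^bsub>SDP\<^esub> inv\<^bsub>SDP\<^esub> (Phi g)) =
       Vc g + Rc g * Vc x + Rc g * Rc x * (- cnj (sf (Rc g)) * vv g)"
  using g x Phi[OF g] rr_sf[OF g]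
  by (simp_all add: mult_RVC inv_RV rr_def vv_def)

lemma twisted_RV:
  assumes "(pr x, pr y) \<in> twisted_conj W phi" "x \<in> carrier SDP" "y \<in> carrier SDP"
  obtains g where "g \<in> carrier SDP" "Rc y = Rc g * Rc x * cnj (sf (Rc g))"
    "Vc y = Vc g + Rc g * Vc x + Rc g * Rc x * (- cnj (sf (Rc g)) * vv g)"
proof -
  obtain g where g: "g \<in> carrier SDP" "pr y = pr (g \<otimes>\<^bsub>SDP\<^esub> x \<otimes>\<^bsub>SDP\<^esub> inv\<^bsub>SDP\<^esub> (Phi g))"
    using twisted_rep assms by blast
  have "g \<otimes>\<^bsub>SDP\<^esub> x \<otimes>\<^bsub>SDP\<^esub> inv\<^bsub>SDP\<^esub> (Phi g) \<in> carrier SDP" using g assms by (simp add: Phi)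
  then have "Rc y = Rc (g \<otimes>\<^bsub>SDP\<^esub> x \<otimes>\<^bsub>SDP\<^esub> inv\<^bsub>SDP\<^esub> (Phi g))"
     "Vc y = Vc (g \<otimes>\<^bsub>SDP\<^esub> x \<otimes>\<^bsub>SDP\<^esub> inv\<^bsub>SDP\<^esub> (Phi g))"
    using peq g assms by blast+
  then show ?thesis using that g tw_RV[OF g(1) assms(2)] by simp
qed

lemma caseA:
  assumes sid: "\<forall>u. cmod u = 1 \<longrightarrow> sf u = u"
  shows "infinite (carrier W // twisted_conj W phi)"
proof -
  define f where "f a = mk (Complex a (sqrt (1 - a * a))) 0 0" for a
  have unit: "cmod (Complex a (sqrt (1 - a * a))) = 1" if "a \<in> {0..1}" for a
  proof -
    have "a * a \<le> 1" using that by (simp add: mult_le_one)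
    then have "(sqrt (1 - a * a))^2 = 1 - a * a" by simp
    then show ?thesis by (simp add: cmod_def power2_eq_square)
  qed
  show ?thesis
  proof (rule class_inj_infinite[of "{0..1}" f])
    show "infinite {0..1::real}" by simp
    show "f i \<in> carrier SDP" if "i \<in> {0..1}" for i using unit[OF that] by (simp add: f_def)
    fix i j assume ij: "i \<in> {0..1}" "j \<in> {0..1}" and rel: "(pr (f i), pr (f j)) \<in> twisted_conj W phi"
    obtain g where g: "g \<in> carrier SDP" "Rc (f j) = Rc g * Rc (f i) * cnj (sf (Rc g))"
      using twisted_RV[OF rel] unit ij by (simp add: f_def) blast
    have "Rc g * cnj (Rc g) = 1" using carrier_unit[OF g(1)] by (simp add: unit_mult_cnj)
    then have "Rc (f j) = Rc (f i)" using g sid carrier_unit[OF g(1)] by (simp add: algebra_simps)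
    then show "i = j" by (simp add: f_def)
  qed
qed

lemma om_conj: "om (w * cnj v1) (w * cnj v2) = - ((cmod w)\<^sup>2) * om v1 v2"
  unfolding cmod_power2 by (simp add: om_def algebra_simps power2_eq_square)

lemma D0_neg: "d \<in> D0 \<Longrightarrow> - d \<in> D0"
  using sub subgroup.m_inv_closed[OF sub] by (simp add: D0_def zc_inv[symmetric])

lemma w_unit:
  assumes w0: "w \<noteq> 0" and Aw: "\<forall>z. Af z = w * cnj z"
  shows "cmod w = 1"
proof -
  define t where "t = (cmod w)\<^sup>2"
  have tpos: "t > 0" using w0 by (simp add: t_def)
  have Pz: "pr (Phi (zc c)) = pr (zc (- t * c))" for c
  proof -
    have om1: "om 1 (\<i> * complex_of_real c) = c" by (simp add: om_def)
    have "om (Af 1) (Af (\<i> * complex_of_real c)) = - t * c"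
    proof -
      have "om (Af 1) (Af (\<i> * complex_of_real c)) = om (w * cnj 1) (w * cnj (\<i> * complex_of_real c))"
        by (simp only: Aw[rule_format])
      also have "\<dots> = - t * om 1 (\<i> * complex_of_real c)" unfolding t_def by (rule om_conj)
      also have "\<dots> = - t * c" by (simp add: om_def)
      finally show ?thesis .
    qed
    then show ?thesis using Phi_zc[of 1 "\<i> * complex_of_real c"] unfolding om1 by simp
  qed
  have up: "t * d \<in> D0" if "d \<in> D0" for d
  proof -
    have e1: "pr (zc d) = pr \<one>\<^bsub>SDP\<^esub>" using that by (simp only: pr_zc_one)
    have "pr (Phi (zc d)) = pr (Phi \<one>\<^bsub>SDP\<^esub>)" using pr_Phi_cong[OF zc_carrier SDPg.one_closed e1] .
    then have "pr (zc (- t * d)) = pr \<one>\<^bsub>SDP\<^esub>" by (simp only: Pz Phi_one)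
    then have "- t * d \<in> D0" by (simp only: pr_zc_one)
    then show ?thesis using D0_neg[of "- t * d"] by simp
  qed
  have down: "d / t \<in> D0" if "d \<in> D0" for d
  proof -
    have "- t * (- d / t) = d" using tpos by simp
    then have "pr (Phi (zc (- d / t))) = pr (zc d)" using Pz[of "- d / t"] by simp
    also have "\<dots> = pr \<one>\<^bsub>SDP\<^esub>" using that by (simp only: pr_zc_one)
    finally have "pr (zc (- d / t)) = pr \<one>\<^bsub>SDP\<^esub>" using Phi_inj[OF zc_carrier] by blast
    then have "- d / t \<in> D0" by (simp only: pr_zc_one)
    then show ?thesis using D0_neg[of "- d / t"] by simp
  qed
  have upn: "t ^ n * d \<in> D0" if "d \<in> D0" for n d
  proof (induction n)
    case 0 then show ?case using that by simp
  next
    case (Suc n)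
    then have "t * (t ^ n * d) \<in> D0" by (rule up)
    then show ?case by (simp add: mult.assoc)
  qed
  have downn: "d / t ^ n \<in> D0" if "d \<in> D0" for n d
  proof (induction n)
    case 0 then show ?case using that by simp
  next
    case (Suc n)
    then have "d / t ^ n / t \<in> D0" by (rule down)
    then show ?case by (simp add: divide_divide_eq_left mult.commute)
  qed
  obtain d where d: "d \<in> D0" "d \<noteq> 0"
  proof -
    have sub1: "D \<subseteq> zc ` D0"
    proof
      fix x assume x: "x \<in> D"
      then obtain c where "x = zc c" using DZ Zc_eq by blast
      then show "x \<in> zc ` D0" using x by (auto simp: D0_def)
    qed
    have "\<not> D0 \<subseteq> {0}"
    proof
      assume "D0 \<subseteq> {0}"
      then have "zc ` D0 \<subseteq> {zc 0}" by auto
      then have "D \<subseteq> {zc 0}" using sub1 by (rule order_trans[rotated])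
      then have "finite D" by (rule finite_subset) simp
      then show False using infD by simp
    qed
    then show ?thesis using that by blast
  qed
  obtain e where e: "e > 0" "\<forall>c. zc c \<in> D \<and> \<bar>c\<bar> < e \<longrightarrow> c = 0" using disc by auto
  have ad: "\<bar>d\<bar> > 0" using d by simp
  have small: "c \<in> D0 \<Longrightarrow> \<bar>c\<bar> < e \<Longrightarrow> c = 0" for c using e by (simp add: D0_def)
  show ?thesis
  proof (rule ccontr)
    assume "cmod w \<noteq> 1"
    moreover have "t = 1 \<Longrightarrow> cmod w = 1" using power2_eq_1_iff[of "cmod w"] norm_ge_zero[of w] unfolding t_def by auto
    ultimately have "t \<noteq> 1" by blast
    then consider "t < 1" | "t > 1" by linarith
    then show False
    proof cases
      case 1
      obtain n where n: "t ^ n < e / \<bar>d\<bar>" using real_arch_pow_inv[of "e / \<bar>d\<bar>" t] e ad 1 by auto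
      have "\<bar>t ^ n * d\<bar> = t ^ n * \<bar>d\<bar>" using tpos by (simp add: abs_mult)
      also have "\<dots> < e" using n ad by (simp add: pos_less_divide_eq)
      finally have "t ^ n * d = 0" using small upn[OF d(1)] by blast
      then show False using tpos d by simp
    next
      case 2
      have "1 / t < 1" using 2 by simp
      then obtain n where n: "(1 / t) ^ n < e / \<bar>d\<bar>" using real_arch_pow_inv[of "e / \<bar>d\<bar>" "1/t"] e ad by auto
      have "\<bar>d / t ^ n\<bar> = (1 / t) ^ n * \<bar>d\<bar>" using tpos by (simp add: abs_divide power_divide)
      also have "\<dots> < e" using n ad by (simp add: pos_less_divide_eq)
      finally have "d / t ^ n = 0" using small downn[OF d(1)] by blast
      then show False using tpos d by simp
    qed
  qed
qed


lemma vv_decomp: assumes g: "g \<in> carrier SDP" shows "vv g = Af (Vc g) + vv (mk (Rc g) 0 0)"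
proof -
  define g0 where "g0 = mk (Rc g) 0 0"
  have g0: "g0 \<in> carrier SDP" "Rc g0 = Rc g" "Vc g0 = 0" using g by (simp_all add: g0_def carrier_unit)
  define n where "n = g \<otimes>\<^bsub>SDP\<^esub> inv\<^bsub>SDP\<^esub> g0"
  have n: "n \<in> carrier SDP" "Rc n = 1" "Vc n = Vc g"
    using g g0 by (simp_all add: n_def mult_RVC inv_RV unit_mult_cnj carrier_unit)
  have "g = n \<otimes>\<^bsub>SDP\<^esub> g0" using g g0 by (simp add: n_def SDPg.m_assoc)
  then have "vv g = vv (n \<otimes>\<^bsub>SDP\<^esub> g0)" by simp
  also have "\<dots> = Af (Vc g) + vv g0" using n g0 by (simp add: rv_mult rr_N vv_N)
  finally show ?thesis by (simp add: g0_def)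
qed

lemma caseB:
  assumes w1: "cmod w = 1" and Aw: "\<forall>z. Af z = w * cnj z" and sc: "\<forall>u. cmod u = 1 \<longrightarrow> sf u = cnj u"
  shows "infinite (carrier W // twisted_conj W phi)"
proof -
  define F where "F z = z + w * cnj z" for z
  have wc: "w * cnj w = 1" using w1 by (simp add: unit_mult_cnj)
  have Fadd: "F (a + b) = F a + F b" for a b by (simp add: F_def algebra_simps)
  have Freal: "F (of_real r * z) = of_real r * F z" for r z by (simp add: F_def algebra_simps)
  have Fneg: "F (- z) = - F z" for z by (simp add: F_def algebra_simps)
  have Fdiff: "F (a - b) = F a - F b" for a b by (simp add: F_def algebra_simps)
  have Fker: "F (z - w * cnj z) = 0" for z
  proof -
    have "F (z - w * cnj z) = z - (w * cnj w) * z" by (simp add: F_def algebra_simps)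
    then show ?thesis using wc by simp
  qed
  obtain q where q: "F q \<noteq> 0"
  proof (cases "F 1 = 0")
    case True
    then have "1 + w = 0" by (simp add: F_def)
    then have "w = -1" by (simp only: add_eq_0_iff)
    then have "F \<i> = 2 * \<i>" by (simp add: F_def)
    then show ?thesis using that[of \<i>] by simp
  next
    case False then show ?thesis using that by blast
  qed
  define c0 where "c0 = vv (mk (-1) 0 0)"
  define M where "M = cmod (F c0) / cmod (F q)"
  have M0: "M \<ge> 0" by (simp add: M_def)
  define f where "f r = mk 1 (of_real r * q) 0" for r
  show ?thesis
  proof (rule class_inj_infinite[of "{M<..}" f])
    show "infinite {M<..}" by (rule infinite_Ioi)
    show "f i \<in> carrier SDP" for i by (simp add: f_def)
    fix r r' assume rr: "r \<in> {M<..}" "r' \<in> {M<..}" and rel: "(pr (f r), pr (f r')) \<in> twisted_conj W phi"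
    obtain g where g: "g \<in> carrier SDP" "Rc (f r') = Rc g * Rc (f r) * cnj (sf (Rc g))"
      "Vc (f r') = Vc g + Rc g * Vc (f r) + Rc g * Rc (f r) * (- cnj (sf (Rc g)) * vv g)"
      using twisted_RV[OF rel] by (simp add: f_def) blast
    define u where "u = Rc g"
    have uu: "cmod u = 1" using g(1) carrier_unit by (simp add: u_def)
    have su: "cnj (sf u) = u" using sc uu by simp
    have u2: "u * u = 1" using g(2) su by (simp add: f_def u_def)
    then have "(u - 1) * (u + 1) = 0" by (simp add: algebra_simps)
    then have u12: "u = 1 \<or> u = -1" by (simp add: eq_neg_iff_add_eq_0)
    have V: "of_real r' * q = Vc g + u * (of_real r * q) - u * u * vv g"
      using g(3) su by (simp add: f_def u_def algebra_simps)
    have vg: "vv g = w * cnj (Vc g) + vv (mk u 0 0)"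
      using vv_decomp[OF g(1)] Aw by (simp add: u_def)
    from u12 show "r = r'"
    proof
      assume u1: "u = 1"
      have "vv (mk 1 0 0) = 0" using rv_one by (simp add: mk_one)
      then have "of_real r' * q = (Vc g - w * cnj (Vc g)) + of_real r * q"
        using V vg u1 by (simp add: algebra_simps)
      then have "F (of_real r' * q) = F (Vc g - w * cnj (Vc g)) + F (of_real r * q)" by (simp add: Fadd)
      then have "of_real r' * F q = of_real r * F q" by (simp add: Fker Freal)
      then show "r = r'" using q by simp
    next
      assume um: "u = -1"
      have "of_real r' * q = (Vc g - w * cnj (Vc g)) - of_real r * q - c0"
        using V vg um by (simp add: algebra_simps c0_def)
      then have "F (of_real r' * q) = F (Vc g - w * cnj (Vc g)) - F (of_real r * q) - F c0"
        by (simp only: Fdiff)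
      then have h: "of_real r' * F q = - (of_real r * F q) - F c0" by (simp add: Fker Freal)
      have "of_real (r + r') * F q = of_real r * F q + of_real r' * F q" by (simp add: distrib_right)
      also have "\<dots> = - F c0" unfolding h by simp
      finally have "of_real (r + r') * F q = - F c0" .
      then have "cmod (of_real (r + r') * F q) = cmod (F c0)" by (metis norm_minus_cancel)
      then have e: "\<bar>r + r'\<bar> * cmod (F q) = M * cmod (F q)" using q by (simp add: M_def norm_mult del: of_real_add)
      have "\<bar>r + r'\<bar> > M" using rr M0 by simp
      then have "\<bar>r + r'\<bar> * cmod (F q) > M * cmod (F q)" using q by simp
      then show "r = r'" using e by simp
    qed
  qed
qed

end



context WL
begin

lemma main_infinite: "infinite (carrier W // twisted_conj W phi)"
proof -
  have "(\<forall>u. cmod u = 1 \<longrightarrow> sf u = u) \<or>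
         (\<exists>w. w \<noteq> 0 \<and> (\<forall>z. Af z = w * cnj z) \<and> (\<forall>u. cmod u = 1 \<longrightarrow> sf u = cnj u))"
    by (rule cplx_class[of Af sf]) (simp_all add: Af_add Af_conj sf_unit sf_mult Af_nonzero)
  then show ?thesis
  proof
    assume "\<forall>u. cmod u = 1 \<longrightarrow> sf u = u"
    then show ?thesis by (rule caseA)
  next
    assume "\<exists>w. w \<noteq> 0 \<and> (\<forall>z. Af z = w * cnj z) \<and> (\<forall>u. cmod u = 1 \<longrightarrow> sf u = cnj u)"
    then obtain w where w: "w \<noteq> 0" "\<forall>z. Af z = w * cnj z" "\<forall>u. cmod u = 1 \<longrightarrow> sf u = cnj u" by blast
    have "cmod w = 1" using w_unit w by blast
    then show ?thesis using caseB w by blast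
  qed
qed

end

lemma dist_zc: "dist \<one>\<^bsub>SDP\<^esub> (zc c) = \<bar>c\<bar>"
proof -
  have zc_eq: "zc c = (mat 1, (0, 0, c))" by (simp add: zc_def mk_def rotm_one)
  have "dist ((0::real), (0::real), (0::real)) (0, 0, c) = \<bar>c\<bar>"
    by (simp add: dist_Pair_Pair dist_real_def)
  then show ?thesis by (simp add: zc_eq SDP_simps dist_Pair_Pair)
qed

lemma disc_from_top:
  assumes top: "subtopology SDP_top D = discrete_topology D" and sub: "subgroup D SDP"
  shows "\<exists>e>0. \<forall>c. zc c \<in> D \<and> \<bar>c\<bar> < e \<longrightarrow> c = 0"
proof -
  have one: "\<one>\<^bsub>SDP\<^esub> \<in> D" using sub subgroup.one_closed by blast
  have "openin (discrete_topology D) {\<one>\<^bsub>SDP\<^esub>}" using one by simp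
  then have "openin (subtopology SDP_top D) {\<one>\<^bsub>SDP\<^esub>}" using top by simp
  then obtain T where T: "openin SDP_top T" "{\<one>\<^bsub>SDP\<^esub>} = T \<inter> D"
    by (meson openin_subtopology)
  then obtain T' where T': "openin euclidean T'" "T = T' \<inter> (SO2 \<times> UNIV)"
    unfolding SDP_top_def by (meson openin_subtopology)
  have oT': "open T'" using T'(1) by (simp only: open_openin)
  have "\<one>\<^bsub>SDP\<^esub> \<in> T \<inter> D" unfolding T(2)[symmetric] by (rule singletonI)
  then have "\<one>\<^bsub>SDP\<^esub> \<in> T" by (rule IntD1)
  then have o1: "\<one>\<^bsub>SDP\<^esub> \<in> T'" unfolding T'(2) by (rule IntD1)
  have "\<exists>e>0. ball \<one>\<^bsub>SDP\<^esub> e \<subseteq> T'" using open_contains_ball[THEN iffD1, OF oT'] o1 by (rule bspec)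
  then obtain e where e: "e > 0" "ball \<one>\<^bsub>SDP\<^esub> e \<subseteq> T'" by blast
  have "c = 0" if c: "zc c \<in> D" "\<bar>c\<bar> < e" for c
  proof -
    have "zc c \<in> ball \<one>\<^bsub>SDP\<^esub> e" using c dist_zc[of c] by (simp add: mem_ball)
    then have "zc c \<in> T'" using e(2) by (rule subsetD[rotated])
    moreover have "zc c \<in> SO2 \<times> UNIV" using zc_carrier[of c] by (simp only: SDP_simps)
    ultimately have "zc c \<in> T \<inter> D" using T'(2) c(1) by (metis IntI)
    then have "zc c = \<one>\<^bsub>SDP\<^esub>" using T(2) by (metis singletonD)
    then show ?thesis by (simp add: zc_def mk_one mk_eq_iff)
  qed
  then show ?thesis using e by blast
qed

theorem proposition5p6:
  fixes D :: "sdp set"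
  assumes "subgroup D SDP"
    and "D \<subseteq> Zc"
    and "subtopology SDP_top D = discrete_topology D"
    and "infinite D"
  shows "top_R_infty_property (Walnut D) (Walnut_top D)"
  unfolding top_R_infty_property_def R_infinite_def
proof (intro allI impI)
  fix phi assume "phi \<in> iso (Walnut D) (Walnut D) \<and> homeomorphic_map (Walnut_top D) (Walnut_top D) phi"
  then have iso: "phi \<in> iso (SDP Mod D) (SDP Mod D)" by (simp add: Walnut_def)
  interpret WL D phi
    by (rule WL.intro[OF assms(1) assms(2) disc_from_top[OF assms(3,1)] assms(4) iso])
  show "infinite (carrier (Walnut D) // twisted_conj (Walnut D) phi)"
    unfolding Walnut_def by (rule main_infinite)
qed


end
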